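(* For every target rate $r>0$, relay power $P_{\rm r}>0$ and $\mathcal C_x\in[0,1)$, the outage probability of the S–R link is \[ \mathcal P_{\rm sr}(P_{\rm r},\mathcal C_x)=1-\frac{1}{\Gamma(m_{\rm rr})\Gamma(m_{\rm sr})\theta_{\rm rr}^{m_{\rm rr}}}\int_0^\infty x^{m_{\rm rr}-1}\,\Gamma\!\left(m_{\rm sr},\frac{P_{\rm r}x+1}{P_{\rm s}\theta_{\rm sr}}\Psi_r\!\left(\frac{P_{\rm r}x\,\mathcal C_x}{P_{\rm r}x+1}\right)\right)e^{-x/\theta_{\rm rr}}\,dx . \]
   Context: Let $P_{\rm s}>0$, $P_{\rm r}>0$ be the source and relay transmit powers. For links $ij\in\{\mathrm{sr},\mathrm{rr},\mathrm{rd},\mathrm{sd}\}$ let $g_{ij}$ be mutually independent random channel gains, $g_{ij}$ gamma distributed with integer shape parameter $m_{ij}\ge1$ and scale $\theta_{ij}=\pi_{ij}/m_{ij}$, where $\pi_{ij}=\mathbb E[g_{ij}]>0$; i.e. $g_{ij}$ has density $x^{m_{ij}-1}e^{-x/\theta_{ij}}/(\Gamma(m_{ij})\theta_{ij}^{m_{ij}})$ for $x\ge0$. For a circularity coefficient $\mathcal C_x\in[0,1)$ define $R_{\rm sr}(P_{\rm r},\mathcal C_x)=\tfrac12\log_2\frac{(P_{\rm s}g_{\rm sr}+P_{\rm r}g_{\rm rr}+1)^2-(P_{\rm r}g_{\rm rr}\mathcal C_x)^2}{(P_{\rm r}g_{\rm rr}+1)^2-(P_{\rm r}g_{\rm rr}\mathcal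 C_x)^2}$ and $R_{\rm rd}(P_{\rm r},\mathcal C_x)=\tfrac12\log_2\frac{(P_{\rm r}g_{\rm rd}+P_{\rm s}g_{\rm sd}+1)^2-(P_{\rm r}g_{\rm rd}\mathcal C_x)^2}{(P_{\rm s}g_{\rm sd}+1)^2}$. For a target rate $r>0$ put $\gamma=2^{2r}-1$, $\eta=2^r-1$ and $\Psi_r(x)=\sqrt{1+\gamma(1-x^2)}-1$. The outage probabilities are $\mathcal P_{\rm sr}=\mathbb P\{R_{\rm sr}<r\}$, $\mathcal P_{\rm rd}=\mathbb P\{R_{\rm rd}<r\}$ and $\mathcal P_{\rm E-E}=\mathbb P\{\min(R_{\rm sr},R_{\rm rd})<r\}$. $\Gamma(a,x)=\int_x^\infty t^{a-1}e^{-t}dt$ is the upper incomplete gamma function. *)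

theory Defs
  imports "HOL-Probability.Probability"
begin

definition gamma_density :: "nat \<Rightarrow> real \<Rightarrow> real \<Rightarrow> real" where
  "gamma_density m \<theta> x =
     (if x < 0 then 0 else x ^ (m - 1) * exp (- x / \<theta>) / (Gamma (real m) * \<theta> ^ m))"

definition upper_inc_Gamma :: "nat \<Rightarrow> real \<Rightarrow> real" where
  "upper_inc_Gamma a x = (LBINT t:{x..}. t ^ (a - 1) * exp (- t))"

definition gam_r :: "real \<Rightarrow> real" where
  "gam_r r = 2 powr (2 * r) - 1"

definition Psi :: "real \<Rightarrow> real \<Rightarrow> real" where
  "Psi r x = sqrt (1 + gam_r r * (1 - x\<^sup>2)) - 1"

definition R_sr :: "real \<Rightarrow> real \<Rightarrow> real \<Rightarrow> real \<Rightarrow> real \<Rightarrow> real" where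
  "R_sr Ps Pr Cx gsr grr =
     1/2 * log 2 (((Ps * gsr + Pr * grr + 1)\<^sup>2 - (Pr * grr * Cx)\<^sup>2) /
                  ((Pr * grr + 1)\<^sup>2 - (Pr * grr * Cx)\<^sup>2))"

end

theory Submission imports Defs begin

lemma slice_iff:
  fixes s a C r :: real
  assumes s: "s \<ge> 0" and a: "a \<ge> 0" and C: "0 \<le> C" "C < 1" and r: "r > 0"
  shows "1/2 * log 2 (((s + a + 1)\<^sup>2 - (a * C)\<^sup>2) / ((a + 1)\<^sup>2 - (a * C)\<^sup>2)) < r
     \<longleftrightarrow> s < (a + 1) * Psi r (a * C / (a + 1))"
proof -
  define x where "x = a * C / (a + 1)"
  define \<gamma> where "\<gamma> = gam_r r"
  have aC: "a * C < a + 1" using mult_left_le[of C a] a C by linarith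
  have aC0: "0 \<le> a * C" using a C by simp
  have D: "(a + 1)\<^sup>2 - (a * C)\<^sup>2 > 0" using power_strict_mono[OF aC aC0, of 2] by simp
  have "(a * C)\<^sup>2 < (s + a + 1)\<^sup>2" using power_strict_mono[of "a*C" "s+a+1" 2] aC aC0 s by simp
  then have N: "(s + a + 1)\<^sup>2 - (a * C)\<^sup>2 > 0" by simp
  have g1: "1 + \<gamma> = 2 powr (2 * r)" unfolding \<gamma>_def gam_r_def by simp
  have gpos: "\<gamma> > 0" unfolding \<gamma>_def gam_r_def using r by simp
  have x01: "0 \<le> x" "x < 1" using aC aC0 a by (auto simp: x_def divide_simps)
  have W: "1 + \<gamma> * (1 - x\<^sup>2) > 0" using x01 gpos
    using power_le_one[of x 2] mult_nonneg_nonneg[of \<gamma> "1-x^2"] by linarith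
  have "1/2 * log 2 (((s + a + 1)\<^sup>2 - (a * C)\<^sup>2) / ((a + 1)\<^sup>2 - (a * C)\<^sup>2)) < r
     \<longleftrightarrow> log 2 (((s + a + 1)\<^sup>2 - (a * C)\<^sup>2) / ((a + 1)\<^sup>2 - (a * C)\<^sup>2)) < 2 * r" by auto
  also have "\<dots> \<longleftrightarrow> ((s + a + 1)\<^sup>2 - (a * C)\<^sup>2) / ((a + 1)\<^sup>2 - (a * C)\<^sup>2) < 1 + \<gamma>"
    using N D g1 by (simp add: log_less_iff)
  also have "\<dots> \<longleftrightarrow> (s + a + 1)\<^sup>2 < (a + 1)\<^sup>2 * (1 + \<gamma> * (1 - x\<^sup>2))"
  proof -
    have e: "(a+1)\<^sup>2 * (1 + \<gamma> * (1 - x\<^sup>2)) = (1+\<gamma>) * ((a + 1)\<^sup>2 - (a * C)\<^sup>2) + (a*C)\<^sup>2"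
      using a by (simp add: x_def power_divide field_simps)
    show ?thesis using e D by (simp add: pos_divide_less_eq del: power_mult_distrib) (simp add: algebra_simps)
  qed
  also have "\<dots> \<longleftrightarrow> s + a + 1 < sqrt ((a + 1)\<^sup>2 * (1 + \<gamma> * (1 - x\<^sup>2)))"
  proof -
    have h: "sqrt ((s+a+1)\<^sup>2) = s+a+1" using s a by simp
    show ?thesis using real_sqrt_less_iff[of "(s+a+1)\<^sup>2" "(a + 1)\<^sup>2 * (1 + \<gamma> * (1 - x\<^sup>2))"] unfolding h by simp
  qed
  also have "\<dots> \<longleftrightarrow> s < (a + 1) * Psi r x"
  proof -
    have "sqrt ((a + 1)\<^sup>2 * (1 + \<gamma> * (1 - x\<^sup>2))) = (a+1) * sqrt (1 + \<gamma> * (1 - x\<^sup>2))"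
      using a by (simp add: real_sqrt_mult)
    then show ?thesis by (simp add: Psi_def \<gamma>_def algebra_simps)
  qed
  finally show ?thesis by (simp add: x_def)
qed

lemma Psi_nonneg:
  assumes "r > 0" "0 \<le> x" "x \<le> 1"
  shows "Psi r x \<ge> 0"
proof -
  have "gam_r r \<ge> 0" unfolding gam_r_def using assms by (simp add: ge_one_powr_ge_zero)
  moreover have "x\<^sup>2 \<le> 1" using assms power_le_one[of x 2] by simp
  ultimately have "1 \<le> 1 + gam_r r * (1 - x\<^sup>2)" by simp
  then show ?thesis unfolding Psi_def by simp
qed

lemma tail_integrable:
  fixes y :: real assumes y: "y \<ge> 0"
  shows "integrable lborel (\<lambda>s. indicator {y..} s * (s ^ k * exp (- s)))"
proof (rule integrableI_nonneg)
  show "(\<lambda>s. indicator {y..} s * (s ^ k * exp (- s))) \<in> borel_measurable lborel" by measurable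
  show "AE x in lborel. 0 \<le> indicator {y..} x * (x ^ k * exp (- x))"
    using y by (auto simp: indicator_def)
  have "(\<integral>\<^sup>+ x. ennreal (indicator {y..} x * (x ^ k * exp (- x))) \<partial>lborel)
      \<le> (\<integral>\<^sup>+x. ennreal (x^k * exp (-x)) * indicator {0 ..} x \<partial>lborel)"
    using y by (intro nn_integral_mono) (auto simp: indicator_def)
  also have "\<dots> = real_of_nat (fact k)" by (rule nn_intergal_power_times_exp_Ici)
  finally show "(\<integral>\<^sup>+ x. ennreal (indicator {y..} x * (x ^ k * exp (- x))) \<partial>lborel) < \<infinity>"
    by (simp add: le_less_trans)
qed

lemma gamma_density_measurable[measurable]: "gamma_density m \<theta> \<in> borel_measurable borel"
  unfolding gamma_density_def[abs_def] by measurable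

lemma gamma_tail:
  assumes m: "m \<ge> 1" and th: "\<theta> > 0" and T: "T \<ge> 0"
  shows "(\<integral>\<^sup>+u. ennreal (gamma_density m \<theta> u) * indicator {T..} u \<partial>lborel)
     = ennreal (upper_inc_Gamma m (T / \<theta>) / Gamma (real m))"
proof -
  have G: "Gamma (real m) > 0" using m by (simp add: Gamma_real_pos)
  have "(\<integral>\<^sup>+u. ennreal (gamma_density m \<theta> u) * indicator {T..} u \<partial>lborel)
     = \<bar>\<theta>\<bar> * (\<integral>\<^sup>+s. ennreal (gamma_density m \<theta> (0 + \<theta> * s)) * indicator {T..} (0 + \<theta> * s) \<partial>lborel)"
    using th by (intro nn_integral_real_affine) auto
  also have "\<dots> = (\<integral>\<^sup>+s. ennreal (indicator {T/\<theta>..} s * (s ^ (m - 1) * exp (- s)) / Gamma (real m)) \<partial>lborel)"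
  proof -
    have "\<bar>\<theta>\<bar> * (ennreal (gamma_density m \<theta> (0 + \<theta> * s)) * indicator {T..} (0 + \<theta> * s))
        = ennreal (indicator {T/\<theta>..} s * (s ^ (m - 1) * exp (- s)) / Gamma (real m))" for s
    proof (cases "T \<le> \<theta> * s")
      case True
      then have s: "s \<ge> 0" using T th by (metis dual_order.trans zero_le_mult_iff not_le less_le)
      have s2: "T/\<theta> \<le> s" using True th by (simp add: divide_le_eq mult.commute)
      have "\<theta> * ((\<theta> * s) ^ (m - 1) * exp (- (\<theta> * s) / \<theta>) / (Gamma (real m) * \<theta> ^ m))
          = s ^ (m - 1) * exp (- s) / Gamma (real m)"
        using th m G by (cases m) (auto simp: power_mult_distrib field_simps)
      moreover have "gamma_density m \<theta> (\<theta> * s) = (\<theta> * s) ^ (m - 1) * exp (- (\<theta> * s) / \<theta>) / (Gamma (real m) * \<theta> ^ m)"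
        proof -
          have "\<not> \<theta> * s < 0" using s th by (simp add: not_less)
          then show ?thesis unfolding gamma_density_def by (simp only: if_False)
        qed
      moreover have "gamma_density m \<theta> (\<theta> * s) \<ge> 0" using s th G by (simp add: gamma_density_def)
      ultimately have "\<bar>\<theta>\<bar> * ennreal (gamma_density m \<theta> (\<theta> * s)) = ennreal (s ^ (m - 1) * exp (- s) / Gamma (real m))"
        using th by (simp add: ennreal_mult[symmetric])
      then show ?thesis using True s2 by simp
    next
      case False
      then have "\<not> T/\<theta> \<le> s" using th by (simp add: divide_le_eq mult.commute)
      then show ?thesis using False by simp
    qed
    then show ?thesis by (simp add: nn_integral_cmult[symmetric])
  qed
  also have "\<dots> = ennreal (\<integral>s. indicator {T/\<theta>..} s * (s ^ (m - 1) * exp (- s)) / Gamma (real m) \<partial>lborel)"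
  proof -
    have Tt: "T/\<theta> \<ge> 0" using T th by simp
    have "AE s in lborel. 0 \<le> indicator {T/\<theta>..} s * (s ^ (m - 1) * exp (- s)) / Gamma (real m)"
    proof (rule AE_I2)
      fix s show "0 \<le> indicator {T/\<theta>..} s * (s ^ (m - 1) * exp (- s)) / Gamma (real m)"
        using Tt G by (cases "T/\<theta> \<le> s") (auto simp: indicator_def)
    qed
    then show ?thesis using Tt
      by (intro nn_integral_eq_integral integrable_divide tail_integrable) auto
  qed
  also have "\<dots> = ennreal (upper_inc_Gamma m (T / \<theta>) / Gamma (real m))"
    unfolding upper_inc_Gamma_def set_lebesgue_integral_def by simp
  finally show ?thesis .
qed

theorem lemma2:
  fixes M :: "'a measure"
    and g :: "nat \<Rightarrow> 'a \<Rightarrow> real"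
    and m :: "nat \<Rightarrow> nat"
    and \<pi> :: "nat \<Rightarrow> real"
    and Ps Pr Cx r :: real
  defines "\<theta> \<equiv> (\<lambda>i. \<pi> i / real (m i))"
  assumes "prob_space M"
    \<comment> \<open>indices: 0 = sr, 1 = rr, 2 = rd, 3 = sd\<close>
    and "prob_space.indep_vars M (\<lambda>_. borel) g {0, 1, 2, 3}"
    and "\<And>i. i \<in> {0, 1, 2, 3} \<Longrightarrow> m i \<ge> 1"
    and "\<And>i. i \<in> {0, 1, 2, 3} \<Longrightarrow> \<pi> i > 0"
    and "\<And>i. i \<in> {0, 1, 2, 3} \<Longrightarrow>
           distributed M lborel (g i) (\<lambda>x. ennreal (gamma_density (m i) (\<theta> i) x))"
    and "Ps > 0" and "Pr > 0" and "r > 0" and "0 \<le> Cx" and "Cx < 1"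
  shows "measure M {\<omega> \<in> space M. R_sr Ps Pr Cx (g 0 \<omega>) (g 1 \<omega>) < r} =
    1 - 1 / (Gamma (real (m 1)) * Gamma (real (m 0)) * \<theta> 1 ^ m 1) *
      (LBINT x:{0..}. x ^ (m 1 - 1) *
         upper_inc_Gamma (m 0) ((Pr * x + 1) / (Ps * \<theta> 0) * Psi r (Pr * x * Cx / (Pr * x + 1)))
         * exp (- x / \<theta> 1))"
proof -
  interpret prob_space M by fact
  note dist = assms(6)
  have mi: "m 0 \<ge> 1" "m 1 \<ge> 1" using assms(4) by auto
  have th: "\<theta> 0 > 0" "\<theta> 1 > 0" using assms(4,5)[of 0] assms(4,5)[of 1] unfolding assms(1) by auto
  define f0 where "f0 = gamma_density (m 0) (\<theta> 0)"
  define f1 where "f1 = gamma_density (m 1) (\<theta> 1)"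
  define D0 where "D0 = density lborel (\<lambda>x. ennreal (f0 x))"
  define D1 where "D1 = density lborel (\<lambda>x. ennreal (f1 x))"
  have f0m[measurable]: "f0 \<in> borel_measurable borel" and f1m[measurable]: "f1 \<in> borel_measurable borel"
    unfolding f0_def f1_def by measurable
  have d0: "distr M lborel (g 0) = D0" "g 0 \<in> borel_measurable M"
    using dist[of 0] unfolding distributed_def D0_def f0_def by auto
  have d1: "distr M lborel (g 1) = D1" "g 1 \<in> borel_measurable M"
    using dist[of 1] unfolding distributed_def D1_def f1_def by auto
  have e0: "distr M borel (g 0) = D0" using d0 by (metis distr_cong sets_lborel)
  have e1: "distr M borel (g 1) = D1" using d1 by (metis distr_cong sets_lborel)
  interpret D0: prob_space D0 using prob_space_distr[OF d0(2)] e0 by simp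
  interpret D1: prob_space D1 using prob_space_distr[OF d1(2)] e1 by simp
  have ind: "indep_var borel (g 1) borel (g 0)"
  proof -
    have "indep_var borel ((\<lambda>f. f 1) \<circ> (\<lambda>\<omega>. restrict (\<lambda>i. g i \<omega>) {1}))
      borel ((\<lambda>f. f 0) \<circ> (\<lambda>\<omega>. restrict (\<lambda>i. g i \<omega>) {0}))"
      by (intro indep_var_compose[OF indep_var_restrict[OF assms(3)]]) auto
    also have "((\<lambda>f. f 1) \<circ> (\<lambda>\<omega>. restrict (\<lambda>i. g i \<omega>) {1})) = g 1" by auto
    also have "((\<lambda>f. f 0) \<circ> (\<lambda>\<omega>. restrict (\<lambda>i. g i \<omega>) {0})) = g 0" by auto
    finally show ?thesis .
  qed
  have pair: "D1 \<Otimes>\<^sub>M D0 = distr M (borel \<Otimes>\<^sub>M borel) (\<lambda>x. (g 1 x, g 0 x))"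
    using ind unfolding indep_var_distribution_eq e0 e1 by simp
  define A where "A = {p :: real \<times> real. R_sr Ps Pr Cx (snd p) (fst p) < r}"
  have Asets: "A \<in> sets (borel \<Otimes>\<^sub>M borel)"
  proof -
    have "(\<lambda>p::real\<times>real. R_sr Ps Pr Cx (snd p) (fst p)) \<in> borel_measurable (borel \<Otimes>\<^sub>M borel)"
      unfolding R_sr_def by measurable
    then have "{p \<in> space (borel \<Otimes>\<^sub>M borel). R_sr Ps Pr Cx (snd p) (fst p) < r} \<in> sets (borel \<Otimes>\<^sub>M borel)"
      by measurable
    then show ?thesis by (simp add: A_def space_pair_measure)
  qed
  have "measure M {\<omega> \<in> space M. R_sr Ps Pr Cx (g 0 \<omega>) (g 1 \<omega>) < r}
      = measure (D1 \<Otimes>\<^sub>M D0) A"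
    unfolding pair using d0(2) d1(2) Asets by (subst measure_distr) (auto simp: A_def intro!: arg_cong[where f=prob])
  have AsD: "A \<in> sets (D1 \<Otimes>\<^sub>M D0)"
    using Asets by (subst sets_pair_measure_cong[of _ borel _ borel]) (auto simp: D0_def D1_def)
  have AsL: "A \<in> sets (lborel \<Otimes>\<^sub>M D0)"
    using Asets by (subst sets_pair_measure_cong[of _ borel _ borel]) (auto simp: D0_def)
  have meP: "(\<lambda>v. emeasure D0 (Pair v -` A)) \<in> borel_measurable lborel"
    using D0.measurable_emeasure_Pair[OF AsL] .
  have E1: "emeasure (D1 \<Otimes>\<^sub>M D0) A = (\<integral>\<^sup>+ v. ennreal (f1 v) * emeasure D0 (Pair v -` A) \<partial>lborel)"
    unfolding D0.emeasure_pair_measure_alt[OF AsD] unfolding D1_def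
    using meP by (subst nn_integral_density) auto
  define T where "T v = (Pr * v + 1) / Ps * Psi r (Pr * v * Cx / (Pr * v + 1))" for v
  define q where "q v = measure D0 {T v..}" for v
  have Pos: "Ps > 0" "Pr > 0" "r > 0" "0 \<le> Cx" "Cx < 1" using assms(7-11) by auto
  have Tnn: "T v \<ge> 0" if "v \<ge> 0" for v
  proof -
    have "Pr * v * Cx \<le> Pr * v" using Pos that mult_left_le[of Cx "Pr * v"] by simp
    then have "Pr * v * Cx \<le> Pr * v + 1" by linarith
    moreover have "0 < Pr * v + 1" using Pos that by (simp add: add_nonneg_pos)
    ultimately have "Pr * v * Cx / (Pr * v + 1) \<le> 1" by (simp add: divide_le_eq_1_pos)
    then have "Psi r (Pr * v * Cx / (Pr * v + 1)) \<ge> 0" using Pos that by (intro Psi_nonneg) auto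
    then show ?thesis unfolding T_def using Pos that by simp
  qed
  have q01: "0 \<le> q v" "q v \<le> 1" for v unfolding q_def by auto
  have qU: "q v = upper_inc_Gamma (m 0) (T v / \<theta> 0) / Gamma (real (m 0))" if "v \<ge> 0" for v
  proof -
    have "emeasure D0 {T v..} = ennreal (upper_inc_Gamma (m 0) (T v / \<theta> 0) / Gamma (real (m 0)))"
      unfolding D0_def f0_def by (subst emeasure_density) (auto intro!: gamma_tail mi th Tnn that)
    moreover have "upper_inc_Gamma (m 0) (T v / \<theta> 0) \<ge> 0"
    proof -
      have "T v / \<theta> 0 \<ge> 0" using Tnn[OF that] th by simp
      then show ?thesis unfolding upper_inc_Gamma_def set_lebesgue_integral_def
        by (intro integral_nonneg_AE AE_I2) (auto simp: indicator_def)
    qed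
    moreover have "Gamma (real (m 0)) > 0" using mi by (simp add: Gamma_real_pos)
    ultimately show ?thesis unfolding q_def measure_def by simp
  qed
  have spD0: "space D0 = UNIV" unfolding D0_def by simp
  have setsD0: "sets D0 = sets borel" unfolding D0_def by simp
  have AEu: "AE u in D0. u \<ge> 0"
    unfolding D0_def by (subst AE_density) (auto intro!: AE_I2 simp: f0_def gamma_density_def not_le)
  have slice: "emeasure D0 (Pair v -` A) = ennreal (1 - q v)" if v: "v \<ge> 0" for v
  proof -
    have "AE u in D0. (u \<in> Pair v -` A) \<longleftrightarrow> (u \<in> space D0 - {T v..})"
      using AEu
    proof (rule AE_mp, intro AE_I2 impI)
      fix u :: real assume u: "0 \<le> u"
      have "u \<in> Pair v -` A \<longleftrightarrow> Ps * u < (Pr * v + 1) * Psi r (Pr * v * Cx / (Pr * v + 1))"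
        unfolding A_def R_sr_def using slice_iff[of "Ps * u" "Pr * v" Cx r] Pos u v by simp
      also have "\<dots> \<longleftrightarrow> u < T v" unfolding T_def using Pos by (simp add: field_simps)
      finally show "(u \<in> Pair v -` A) \<longleftrightarrow> (u \<in> space D0 - {T v..})" by (simp add: spD0 not_le)
    qed
    then have "emeasure D0 (Pair v -` A) = emeasure D0 (space D0 - {T v..})"
    proof (rule emeasure_eq_AE)
      show "Pair v -` A \<in> sets D0" using sets_Pair1[OF AsL] .
      show "space D0 - {T v..} \<in> sets D0" by (simp add: setsD0 spD0)
    qed
    also have "\<dots> = ennreal (1 - q v)"
      unfolding q_def by (subst D0.emeasure_eq_measure, subst D0.prob_compl) (auto simp: setsD0)
    finally show ?thesis .
  qed
  have G1: "Gamma (real (m 1)) > 0" "Gamma (real (m 0)) > 0" using mi by (simp_all add: Gamma_real_pos)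
  have f1nn: "f1 v \<ge> 0" for v using th G1 by (simp add: f1_def gamma_density_def)
  have f1neg: "f1 v = 0" if "v < 0" for v using that by (simp add: f1_def gamma_density_def)
  define h where "h v = f1 v * (1 - q v)" for v
  have hnn: "h v \<ge> 0" for v unfolding h_def using f1nn q01[of v] by simp
  have hpt: "ennreal (f1 v) * emeasure D0 (Pair v -` A) = ennreal (h v)" for v
  proof (cases "v < 0")
    case True then show ?thesis by (simp add: f1neg h_def)
  next
    case False then show ?thesis using slice[of v] f1nn[of v] q01[of v] by (simp add: h_def ennreal_mult)
  qed
  have hmeas: "h \<in> borel_measurable lborel"
  proof -
    have "h = (\<lambda>v. f1 v * enn2real (emeasure D0 (Pair v -` A)))"
    proof
      fix v show "h v = f1 v * enn2real (emeasure D0 (Pair v -` A))"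
      proof (cases "v < 0")
        case True then show ?thesis by (simp add: f1neg h_def)
      next
        case False then show ?thesis using slice[of v] q01[of v] by (simp add: h_def)
      qed
    qed
    then show ?thesis using meP by simp
  qed
  have int1: "(\<integral>\<^sup>+ v. ennreal (f1 v) \<partial>lborel) = 1"
  proof -
    have "emeasure D1 (space D1) = 1" by (rule D1.emeasure_space_1)
    then show ?thesis unfolding D1_def by (simp add: emeasure_density)
  qed
  have f1int: "integrable lborel f1"
    by (rule integrableI_nonneg) (auto simp: int1 f1nn)
  have f1I: "integral\<^sup>L lborel f1 = 1"
    using nn_integral_eq_integral[OF f1int] int1 f1nn by simp
  have hint: "integrable lborel h"
  proof (rule Bochner_Integration.integrable_bound[OF f1int hmeas], intro AE_I2)
    fix v show "norm (h v) \<le> norm (f1 v)"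
      using f1nn[of v] q01[of v] hnn[of v] unfolding h_def by (simp add: mult_left_le)
  qed
  have main1: "measure (D1 \<Otimes>\<^sub>M D0) A = integral\<^sup>L lborel h"
  proof -
    have "emeasure (D1 \<Otimes>\<^sub>M D0) A = (\<integral>\<^sup>+ v. ennreal (h v) \<partial>lborel)"
      unfolding E1 using hpt by simp
    also have "\<dots> = ennreal (integral\<^sup>L lborel h)"
      using hint hnn by (intro nn_integral_eq_integral) auto
    finally show ?thesis unfolding measure_def using hnn by simp
  qed
  have fqint: "integrable lborel (\<lambda>v. f1 v * q v)"
  proof -
    have "(\<lambda>v. f1 v * q v) = (\<lambda>v. f1 v - h v)" by (simp add: h_def algebra_simps)
    then show ?thesis using f1int hint by simp
  qed
  have main2: "integral\<^sup>L lborel h = 1 - integral\<^sup>L lborel (\<lambda>v. f1 v * q v)"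
  proof -
    have "integral\<^sup>L lborel h = integral\<^sup>L lborel (\<lambda>v. f1 v - f1 v * q v)"
      by (intro Bochner_Integration.integral_cong) (auto simp: h_def algebra_simps)
    also have "\<dots> = integral\<^sup>L lborel f1 - integral\<^sup>L lborel (\<lambda>v. f1 v * q v)"
      using f1int fqint by (rule Bochner_Integration.integral_diff)
    finally show ?thesis using f1I by simp
  qed
  have main3: "integral\<^sup>L lborel (\<lambda>v. f1 v * q v) =
      1 / (Gamma (real (m 1)) * Gamma (real (m 0)) * \<theta> 1 ^ m 1) *
      (LBINT x:{0..}. x ^ (m 1 - 1) *
         upper_inc_Gamma (m 0) ((Pr * x + 1) / (Ps * \<theta> 0) * Psi r (Pr * x * Cx / (Pr * x + 1)))
         * exp (- x / \<theta> 1))"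
    unfolding set_lebesgue_integral_def integral_mult_right_zero[symmetric]
  proof (rule Bochner_Integration.integral_cong[OF refl])
    fix v :: real
    show "f1 v * q v = 1 / (Gamma (real (m 1)) * Gamma (real (m 0)) * \<theta> 1 ^ m 1) *
      (indicator {0..} v *\<^sub>R (v ^ (m 1 - 1) *
         upper_inc_Gamma (m 0) ((Pr * v + 1) / (Ps * \<theta> 0) * Psi r (Pr * v * Cx / (Pr * v + 1)))
         * exp (- v / \<theta> 1)))"
    proof (cases "v < 0")
      case True then show ?thesis by (simp add: f1neg)
    next
      case False
      have "T v / \<theta> 0 = (Pr * v + 1) / (Ps * \<theta> 0) * Psi r (Pr * v * Cx / (Pr * v + 1))"
        unfolding T_def by simp
      define U where "U = upper_inc_Gamma (m 0) ((Pr * v + 1) / (Ps * \<theta> 0) * Psi r (Pr * v * Cx / (Pr * v + 1)))"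
      have qv: "q v = U / Gamma (real (m 0))"
        using qU[of v] False \<open>T v / \<theta> 0 = _\<close> unfolding U_def by simp
      show ?thesis unfolding U_def[symmetric] using qv False G1 th
        by (simp add: f1_def gamma_density_def field_simps)
    qed
  qed
  show ?thesis using main1 main2 main3 \<open>prob _ = _\<close> by simp
qed

end
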